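(* Let $A$ be any of $L_d$, $C_d$ ($d\in\{2,3,\dots\}$), or $L_\infty$. Let $p\in[1,\infty)$, let $(X,\mathcal{B},\mu)$ be a $\sigma$-finite measure space, and let $\rho\colon A\to L(L^p(X,\mu))$ be a representation. Let $u\in L(l^p(\mathbb{Z}))$ be the bilateral shift $(u\eta)(m)=\eta(m-1)$, and let $\rho_u\colon A\to L(L^p(X\times\mathbb{Z},\mu\times\nu))$ ($\nu$ counting measure) be the unique representation with $\rho_u(s_j)=\rho(s_j)\otimes u$ and $\rho_u(t_j)=\rho(t_j)\otimes u^{-1}$ for all $j$. Then $\|\rho_u(a)\|\ge\|\rho(a)\|$ for every $a\in A$.
   Context: $L_d$ is the universal complex unital algebra generated by $s_1,\dots,s_d,t_1,\dots,t_d$ with $t_js_j=1$, $t_js_k=0$ ($j\ne k$), $\sum_js_jt_j=1$; $C_d$ has the same generators with only $t_js_j=1$, $t_js_k=0$ ($j\ne k$); $L_\infty$ is on $s_1,s_2,\dots,t_1,t_2,\dots$ with $t_js_j=1$, $t_js_k=0$ ($j\ne k$). A representation is a unital algebra homomorphism into $L(E)$. For bounded operators $a$ on $L^p(X,\mu)$ and $b$ on $L^p(Y,\nu)$ ($\sigma$-finite, $p<\infty$), $a\otimes b$ denotes the unique bounded operator on $L^p(X\times Y,\mu\times\nu)$ with $(a\otimes b)(\xi\otimes\eta)=a\xi\otimes b\eta$, where $(\xi\otimes\eta)(x,y)=\xi(x)\eta(y)$; one has $\|a\otimes b\|=\|a\|\|b\|$. *)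

theory Defs
  imports "HOL-Analysis.Analysis"
begin

text \<open>Complex L^p spaces, represented by concrete functions (operators act on representatives,
  equality of operators is equality almost everywhere on L^p).\<close>

type_synonym 'x op = "('x \<Rightarrow> complex) \<Rightarrow> ('x \<Rightarrow> complex)"

definition Lp :: "'x measure \<Rightarrow> real \<Rightarrow> ('x \<Rightarrow> complex) set" where
  "Lp M p = {f. f \<in> borel_measurable M \<and> (\<integral>\<^sup>+ x. ennreal (cmod (f x) powr p) \<partial>M) < \<infinity>}"

definition pnorm :: "'x measure \<Rightarrow> real \<Rightarrow> ('x \<Rightarrow> complex) \<Rightarrow> real" where
  "pnorm M p f = enn2real (\<integral>\<^sup>+ x. ennreal (cmod (f x) powr p) \<partial>M) powr (1 / p)"

definition bounded_op :: "'x measure \<Rightarrow> real \<Rightarrow> 'x op \<Rightarrow> bool" where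
  "bounded_op M p T \<longleftrightarrow>
     (\<forall>f\<in>Lp M p. T f \<in> Lp M p) \<and>
     (\<forall>f\<in>Lp M p. \<forall>g\<in>Lp M p. (AE x in M. f x = g x) \<longrightarrow> (AE x in M. T f x = T g x)) \<and>
     (\<forall>f\<in>Lp M p. \<forall>g\<in>Lp M p. AE x in M. T (\<lambda>y. f y + g y) x = T f x + T g x) \<and>
     (\<forall>f\<in>Lp M p. \<forall>c. AE x in M. T (\<lambda>y. c * f y) x = c * T f x) \<and>
     (\<exists>C. \<forall>f\<in>Lp M p. pnorm M p (T f) \<le> C * pnorm M p f)"

definition op_eq :: "'x measure \<Rightarrow> real \<Rightarrow> 'x op \<Rightarrow> 'x op \<Rightarrow> bool" where
  "op_eq M p T S \<longleftrightarrow> (\<forall>f\<in>Lp M p. AE x in M. T f x = S f x)"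

definition op_norm :: "'x measure \<Rightarrow> real \<Rightarrow> 'x op \<Rightarrow> real" where
  "op_norm M p T = Sup ((\<lambda>f. pnorm M p (T f)) ` {f \<in> Lp M p. pnorm M p f \<le> 1})"

text \<open>Noncommutative polynomials in the generators s_j, t_j (elements of the free algebra);
  every element of L_d, C_d, L_infinity is the image of such a term.\<close>
datatype ncpoly = Scal complex | GenS nat | GenT nat | Add ncpoly ncpoly | Mul ncpoly ncpoly

fun gens_in :: "ncpoly \<Rightarrow> nat set" where
  "gens_in (Scal c) = {}"
| "gens_in (GenS j) = {j}"
| "gens_in (GenT j) = {j}"
| "gens_in (Add P Q) = gens_in P \<union> gens_in Q"
| "gens_in (Mul P Q) = gens_in P \<union> gens_in Q"

fun ev :: "(nat \<Rightarrow> 'x op) \<Rightarrow> (nat \<Rightarrow> 'x op) \<Rightarrow> ncpoly \<Rightarrow> 'x op" where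
  "ev s t (Scal c) = (\<lambda>f x. c * f x)"
| "ev s t (GenS j) = s j"
| "ev s t (GenT j) = t j"
| "ev s t (Add P Q) = (\<lambda>f x. ev s t P f x + ev s t Q f x)"
| "ev s t (Mul P Q) = (\<lambda>f. ev s t P (ev s t Q f))"

datatype alg = L nat | C nat | Linf

fun idx :: "alg \<Rightarrow> nat set" where
  "idx (L d) = {1..d}"
| "idx (C d) = {1..d}"
| "idx Linf = {1..}"

fun valid_alg :: "alg \<Rightarrow> bool" where
  "valid_alg (L d) = (d \<ge> 2)"
| "valid_alg (C d) = (d \<ge> 2)"
| "valid_alg Linf = True"

text \<open>A representation of A on L^p(M), given by the images s j, t j of the generators,
  which must be bounded operators satisfying the defining relations of A.\<close>
definition is_rep :: "alg \<Rightarrow> 'x measure \<Rightarrow> real \<Rightarrow> (nat \<Rightarrow> 'x op) \<Rightarrow> (nat \<Rightarrow> 'x op) \<Rightarrow> bool" where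
  "is_rep A M p s t \<longleftrightarrow>
     (\<forall>j\<in>idx A. bounded_op M p (s j) \<and> bounded_op M p (t j)) \<and>
     (\<forall>j\<in>idx A. \<forall>k\<in>idx A.
        op_eq M p (\<lambda>f. t j (s k f)) (if j = k then (\<lambda>f. f) else (\<lambda>f x. 0))) \<and>
     (case A of L d \<Rightarrow> op_eq M p (\<lambda>f x. \<Sum>j\<in>{1..d}. s j (t j f) x) (\<lambda>f. f) | _ \<Rightarrow> True)"

definition tensor :: "('x \<Rightarrow> complex) \<Rightarrow> ('y \<Rightarrow> complex) \<Rightarrow> ('x \<times> 'y \<Rightarrow> complex)" where
  "tensor \<xi> \<eta> = (\<lambda>(x, y). \<xi> x * \<eta> y)"

definition shift :: "(int \<Rightarrow> complex) \<Rightarrow> (int \<Rightarrow> complex)" where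
  "shift \<eta> = (\<lambda>m. \<eta> (m - 1))"

definition shift_inv :: "(int \<Rightarrow> complex) \<Rightarrow> (int \<Rightarrow> complex)" where
  "shift_inv \<eta> = (\<lambda>m. \<eta> (m + 1))"

end

theory Submission imports Defs "HOL-Real_Asymp.Real_Asymp" begin

lemma meas_pow[measurable]:
  "f \<in> borel_measurable N \<Longrightarrow> (\<lambda>x. ennreal (cmod (f x) powr p)) \<in> borel_measurable N"
  by measurable

lemma meas_pow_r[measurable]:
  "f \<in> borel_measurable N \<Longrightarrow> (\<lambda>x. cmod (f x) powr p) \<in> borel_measurable N"
  by measurable

lemma Lp_zero: "(\<lambda>x. 0) \<in> Lp N p"
  by (simp add: Lp_def)

lemma pnorm_zero: "p > 0 \<Longrightarrow> pnorm N p (\<lambda>x. 0) = 0"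
  by (simp add: pnorm_def)

lemma pnorm_nonneg: "pnorm N p f \<ge> 0"
  by (simp add: pnorm_def)

lemma Lp_scal:
  assumes f: "f \<in> Lp N p" and p: "p > 0"
  shows "(\<lambda>x. c * f x) \<in> Lp N p" "pnorm N p (\<lambda>x. c * f x) = cmod c * pnorm N p f"
proof -
  have m: "f \<in> borel_measurable N" and fin: "(\<integral>\<^sup>+ x. ennreal (cmod (f x) powr p) \<partial>N) < \<infinity>"
    using f by (auto simp: Lp_def)
  have eq: "(\<integral>\<^sup>+ x. ennreal (cmod (c * f x) powr p) \<partial>N)
      = ennreal (cmod c powr p) * (\<integral>\<^sup>+ x. ennreal (cmod (f x) powr p) \<partial>N)"
    by (subst nn_integral_cmult[symmetric]) (auto simp: m norm_mult powr_mult ennreal_mult intro: meas_pow_r)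
  show "(\<lambda>x. c * f x) \<in> Lp N p"
    using m fin by (simp add: Lp_def eq ennreal_mult_less_top)
  have "pnorm N p (\<lambda>x. c * f x) = (cmod c powr p * enn2real (\<integral>\<^sup>+ x. ennreal (cmod (f x) powr p) \<partial>N)) powr (1/p)"
    unfolding pnorm_def eq by (simp add: enn2real_mult)
  also have "\<dots> = (cmod c powr p) powr (1/p) * enn2real (\<integral>\<^sup>+ x. ennreal (cmod (f x) powr p) \<partial>N) powr (1/p)"
    by (simp add: powr_mult)
  also have "(cmod c powr p) powr (1/p) = cmod c"
    using p by (simp add: powr_powr)
  finally show "pnorm N p (\<lambda>x. c * f x) = cmod c * pnorm N p f"
    by (simp add: pnorm_def)
qed

lemma pow_add_le:
  fixes a b :: complex assumes p: "p > 0"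
  shows "cmod (a + b) powr p \<le> 2 powr p * (cmod a powr p + cmod b powr p)"
proof -
  have "cmod (a+b) \<le> 2 * max (cmod a) (cmod b)"
    using norm_triangle_ineq[of a b] by linarith
  hence "cmod (a+b) powr p \<le> (2 * max (cmod a) (cmod b)) powr p"
    using p by (intro powr_mono2) auto
  also have "\<dots> = 2 powr p * max (cmod a) (cmod b) powr p"
    by (simp add: powr_mult)
  also have "max (cmod a) (cmod b) powr p \<le> cmod a powr p + cmod b powr p"
    by (cases "cmod a \<le> cmod b") (auto simp: max_def)
  finally show ?thesis by (simp add: mult_left_mono)
qed

lemma root_add_le:
  fixes a b :: real assumes p: "p \<ge> 1" and a: "a \<ge> 0" and b: "b \<ge> 0"
  shows "(2 powr p * (a + b)) powr (1/p) \<le> 4 * (a powr (1/p) + b powr (1/p))"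
proof -
  have "(2 powr p * (a + b)) powr (1/p) = 2 * (a + b) powr (1/p)"
    using p a b by (simp add: powr_mult powr_powr)
  also have "(a + b) powr (1/p) \<le> (2 * max a b) powr (1/p)"
    using p a b by (intro powr_mono2) auto
  also have "\<dots> = 2 powr (1/p) * max a b powr (1/p)"
    using a b by (simp add: powr_mult)
  also have "2 powr (1/p) \<le> (2::real)"
    using p powr_mono[of "1/p" 1 2] by simp
  also have "max a b powr (1/p) \<le> a powr (1/p) + b powr (1/p)"
    by (cases "a \<le> b") (auto simp: max_def)
  finally show ?thesis
    by (auto simp: mult_left_mono mult_right_mono)
qed

lemma Lp_add:
  assumes f: "f \<in> Lp N p" and g: "g \<in> Lp N p" and p: "p \<ge> 1"
  shows "(\<lambda>x. f x + g x) \<in> Lp N p"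
    "pnorm N p (\<lambda>x. f x + g x) \<le> 4 * (pnorm N p f + pnorm N p g)"
proof -
  have mf: "f \<in> borel_measurable N" and fin: "(\<integral>\<^sup>+ x. ennreal (cmod (f x) powr p) \<partial>N) < \<infinity>"
    using f by (auto simp: Lp_def)
  have mg: "g \<in> borel_measurable N" and gin: "(\<integral>\<^sup>+ x. ennreal (cmod (g x) powr p) \<partial>N) < \<infinity>"
    using g by (auto simp: Lp_def)
  define I where "I h = (\<integral>\<^sup>+ x. ennreal (cmod (h x) powr p) \<partial>N)" for h
  have le: "I (\<lambda>x. f x + g x) \<le> ennreal (2 powr p) * (I f + I g)"
  proof -
    have "I (\<lambda>x. f x + g x) \<le> (\<integral>\<^sup>+ x. ennreal (2 powr p) * (ennreal (cmod (f x) powr p) + ennreal (cmod (g x) powr p)) \<partial>N)"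
      unfolding I_def using p
      by (intro nn_integral_mono) (auto simp: ennreal_mult[symmetric] ennreal_plus[symmetric] pow_add_le simp del: ennreal_plus)
    also have "\<dots> = ennreal (2 powr p) * (I f + I g)"
      unfolding I_def using mf mg
      by (subst nn_integral_cmult) (auto simp: nn_integral_add)
    finally show ?thesis .
  qed
  have fin2: "I (\<lambda>x. f x + g x) < \<infinity>"
    using le fin gin unfolding I_def
    by (simp add: ennreal_mult_less_top le_less_trans)
  show "(\<lambda>x. f x + g x) \<in> Lp N p"
    using fin2 mf mg unfolding Lp_def I_def by auto
  have "enn2real (I (\<lambda>x. f x + g x)) \<le> enn2real (ennreal (2 powr p) * (I f + I g))"
    using le fin gin unfolding I_def
    by (intro enn2real_mono) (auto simp: ennreal_mult_less_top)
  also have "\<dots> = 2 powr p * (enn2real (I f) + enn2real (I g))"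
    using fin gin unfolding I_def by (simp add: enn2real_mult enn2real_plus)
  finally have "pnorm N p (\<lambda>x. f x + g x) \<le> (2 powr p * (enn2real (I f) + enn2real (I g))) powr (1/p)"
    unfolding pnorm_def I_def using p by (intro powr_mono2) auto
  also have "\<dots> \<le> 4 * (enn2real (I f) powr (1/p) + enn2real (I g) powr (1/p))"
    using p by (intro root_add_le) auto
  finally show "pnorm N p (\<lambda>x. f x + g x) \<le> 4 * (pnorm N p f + pnorm N p g)"
    unfolding pnorm_def I_def .
qed

lemma bounded_op_scal:
  fixes N :: "'a measure"
  assumes p: "p \<ge> 1" shows "bounded_op N p (\<lambda>f x. c * f x)"
  unfolding bounded_op_def
proof (intro conjI ballI allI impI)
  fix f :: "'a \<Rightarrow> complex" assume "f \<in> Lp N p" thus "(\<lambda>x. c * f x) \<in> Lp N p" using p Lp_scal(1)[of f N p c] by auto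
next
  fix f g :: "'a \<Rightarrow> complex" assume "AE x in N. f x = g x" thus "AE x in N. c * f x = c * g x" by auto
next
  fix f g :: "'a \<Rightarrow> complex" show "AE x in N. c * (f x + g x) = c * f x + c * g x" by (simp add: algebra_simps)
next
  fix f :: "'a \<Rightarrow> complex" and d show "AE x in N. c * (d * f x) = d * (c * f x)" by (simp add: algebra_simps)
next
  show "\<exists>C. \<forall>f\<in>Lp N p. pnorm N p (\<lambda>x. c * f x) \<le> C * pnorm N p f"
    using p by (intro exI[of _ "cmod c"]) (auto simp: Lp_scal(2))
qed

lemma bounded_opD:
  assumes "bounded_op N p T"
  shows "\<And>f. f \<in> Lp N p \<Longrightarrow> T f \<in> Lp N p"
    "\<And>f g. f \<in> Lp N p \<Longrightarrow> g \<in> Lp N p \<Longrightarrow> (AE x in N. f x = g x) \<Longrightarrow> (AE x in N. T f x = T g x)"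
    "\<And>f g. f \<in> Lp N p \<Longrightarrow> g \<in> Lp N p \<Longrightarrow> AE x in N. T (\<lambda>y. f y + g y) x = T f x + T g x"
    "\<And>f c. f \<in> Lp N p \<Longrightarrow> AE x in N. T (\<lambda>y. c * f y) x = c * T f x"
    "\<exists>C\<ge>0. \<forall>f\<in>Lp N p. pnorm N p (T f) \<le> C * pnorm N p f"
proof -
  show "\<And>f. f \<in> Lp N p \<Longrightarrow> T f \<in> Lp N p"
    "\<And>f g. f \<in> Lp N p \<Longrightarrow> g \<in> Lp N p \<Longrightarrow> (AE x in N. f x = g x) \<Longrightarrow> (AE x in N. T f x = T g x)"
    "\<And>f g. f \<in> Lp N p \<Longrightarrow> g \<in> Lp N p \<Longrightarrow> AE x in N. T (\<lambda>y. f y + g y) x = T f x + T g x"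
    "\<And>f c. f \<in> Lp N p \<Longrightarrow> AE x in N. T (\<lambda>y. c * f y) x = c * T f x"
    using assms unfolding bounded_op_def by blast+
  obtain C where C: "\<forall>f\<in>Lp N p. pnorm N p (T f) \<le> C * pnorm N p f"
    using assms unfolding bounded_op_def by blast
  show "\<exists>C\<ge>0. \<forall>f\<in>Lp N p. pnorm N p (T f) \<le> C * pnorm N p f"
  proof (intro exI[of _ "max C 0"] conjI ballI)
    fix f assume "f \<in> Lp N p"
    hence "pnorm N p (T f) \<le> C * pnorm N p f" using C by auto
    also have "\<dots> \<le> max C 0 * pnorm N p f" using pnorm_nonneg[of N p f]
      by (intro mult_right_mono) auto
    finally show "pnorm N p (T f) \<le> max C 0 * pnorm N p f" .
  qed simp
qed

lemma bounded_op_add: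
  assumes p: "p \<ge> 1" and T: "bounded_op N p T" and S: "bounded_op N p S"
  shows "bounded_op N p (\<lambda>f x. T f x + S f x)"
proof -
  note T' = bounded_opD[OF T] and S' = bounded_opD[OF S]
  obtain CT where CT: "CT \<ge> 0" "\<forall>f\<in>Lp N p. pnorm N p (T f) \<le> CT * pnorm N p f" using T'(5) by blast
  obtain CS where CS: "CS \<ge> 0" "\<forall>f\<in>Lp N p. pnorm N p (S f) \<le> CS * pnorm N p f" using S'(5) by blast
  show ?thesis unfolding bounded_op_def
  proof (intro conjI ballI allI impI)
    fix f assume "f \<in> Lp N p" thus "(\<lambda>x. T f x + S f x) \<in> Lp N p"
      using T'(1) S'(1) Lp_add p by blast
  next
    fix f g assume f: "f \<in> Lp N p" and g: "g \<in> Lp N p" and e: "AE x in N. f x = g x"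
    show "AE x in N. T f x + S f x = T g x + S g x"
      using T'(2)[OF f g e] S'(2)[OF f g e] by eventually_elim simp
  next
    fix f g assume f: "f \<in> Lp N p" and g: "g \<in> Lp N p"
    show "AE x in N. T (\<lambda>y. f y + g y) x + S (\<lambda>y. f y + g y) x = T f x + S f x + (T g x + S g x)"
      using T'(3)[OF f g] S'(3)[OF f g] by eventually_elim simp
  next
    fix f c assume f: "f \<in> Lp N p"
    show "AE x in N. T (\<lambda>y. c * f y) x + S (\<lambda>y. c * f y) x = c * (T f x + S f x)"
      using T'(4)[OF f, of c] S'(4)[OF f, of c] by eventually_elim (simp add: algebra_simps)
  next
    show "\<exists>C. \<forall>f\<in>Lp N p. pnorm N p (\<lambda>x. T f x + S f x) \<le> C * pnorm N p f"
    proof (intro exI[of _ "4 * (CT + CS)"] ballI)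
      fix f assume f: "f \<in> Lp N p"
      have "pnorm N p (\<lambda>x. T f x + S f x) \<le> 4 * (pnorm N p (T f) + pnorm N p (S f))"
        using Lp_add(2)[OF T'(1)[OF f] S'(1)[OF f] p] .
      also have "\<dots> \<le> 4 * (CT * pnorm N p f + CS * pnorm N p f)"
        using CT(2) CS(2) f by (smt (verit))
      finally show "pnorm N p (\<lambda>x. T f x + S f x) \<le> 4 * (CT + CS) * pnorm N p f"
        by (simp add: algebra_simps)
    qed
  qed
qed

lemma bounded_op_comp:
  assumes p: "p \<ge> 1" and T: "bounded_op N p T" and S: "bounded_op N p S"
  shows "bounded_op N p (\<lambda>f. T (S f))"
proof -
  note T' = bounded_opD[OF T] and S' = bounded_opD[OF S]
  obtain CT where CT: "CT \<ge> 0" "\<forall>f\<in>Lp N p. pnorm N p (T f) \<le> CT * pnorm N p f" using T'(5) by blast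
  obtain CS where CS: "CS \<ge> 0" "\<forall>f\<in>Lp N p. pnorm N p (S f) \<le> CS * pnorm N p f" using S'(5) by blast
  show ?thesis unfolding bounded_op_def
  proof (intro conjI ballI allI impI)
    fix f assume "f \<in> Lp N p" thus "T (S f) \<in> Lp N p"
      using T'(1) S'(1) by blast
  next
    fix f g assume f: "f \<in> Lp N p" and g: "g \<in> Lp N p" and e: "AE x in N. f x = g x"
    show "AE x in N. T (S f) x = T (S g) x"
      using T'(2)[OF S'(1)[OF f] S'(1)[OF g] S'(2)[OF f g e]] .
  next
    fix f g assume f: "f \<in> Lp N p" and g: "g \<in> Lp N p"
    have 1: "AE x in N. T (S (\<lambda>y. f y + g y)) x = T (\<lambda>y. S f y + S g y) x"
      using T'(2)[OF S'(1)[OF Lp_add(1)[OF f g p]] Lp_add(1)[OF S'(1)[OF f] S'(1)[OF g] p] S'(3)[OF f g]] .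
    show "AE x in N. T (S (\<lambda>y. f y + g y)) x = T (S f) x + T (S g) x"
      using 1 T'(3)[OF S'(1)[OF f] S'(1)[OF g]] by eventually_elim simp
  next
    fix f c assume f: "f \<in> Lp N p"
    have 1: "AE x in N. T (S (\<lambda>y. c * f y)) x = T (\<lambda>y. c * S f y) x"
      using T'(2)[OF S'(1)[OF Lp_scal(1)[OF f]] Lp_scal(1)[OF S'(1)[OF f]] S'(4)[OF f]] p by auto
    show "AE x in N. T (S (\<lambda>y. c * f y)) x = c * T (S f) x"
      using 1 T'(4)[OF S'(1)[OF f], of c] by eventually_elim simp
  next
    show "\<exists>C. \<forall>f\<in>Lp N p. pnorm N p (T (S f)) \<le> C * pnorm N p f"
    proof (intro exI[of _ "CT * CS"] ballI)
      fix f assume f: "f \<in> Lp N p"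
      have "pnorm N p (T (S f)) \<le> CT * pnorm N p (S f)"
        using CT S'(1)[OF f] by auto
      also have "\<dots> \<le> CT * (CS * pnorm N p f)"
        using CT CS f by (intro mult_left_mono) auto
      finally show "pnorm N p (T (S f)) \<le> CT * CS * pnorm N p f"
        by (simp add: algebra_simps)
    qed
  qed
qed

lemma bounded_op_ev:
  assumes p: "p \<ge> 1" and ST: "\<forall>j\<in>J. bounded_op N p (S j) \<and> bounded_op N p (T j)"
  shows "gens_in P \<subseteq> J \<Longrightarrow> bounded_op N p (ev S T P)"
  by (induction P) (use ST p in \<open>auto intro: bounded_op_scal bounded_op_add bounded_op_comp\<close>)

lemma lsum_Lp:
  assumes p: "p \<ge> 1"
  shows "(\<forall>x\<in>set xs. \<phi> x \<in> Lp N p) \<Longrightarrow> (\<lambda>z. sum_list (map (\<lambda>x. \<phi> x z) xs)) \<in> Lp N p"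
proof (induction xs)
  case Nil thus ?case by (simp add: Lp_zero)
next
  case (Cons y xs) thus ?case using Lp_add(1)[OF _ _ p, of "\<phi> y" N] by auto
qed

lemma op_sum:
  assumes p: "p \<ge> 1" and T: "bounded_op N p T"
  shows "(\<forall>x\<in>set xs. \<phi> x \<in> Lp N p) \<Longrightarrow>
    AE y in N. T (\<lambda>z. sum_list (map (\<lambda>x. \<phi> x z) xs)) y = sum_list (map (\<lambda>x. T (\<phi> x) y) xs)"
proof (induction xs)
  case Nil
  have "AE y in N. T (\<lambda>z. 0 * (0::complex)) y = 0 * T (\<lambda>z. 0) y"
    using bounded_opD(4)[OF T Lp_zero] by blast
  thus ?case by simp
next
  case (Cons y xs)
  have r: "(\<lambda>z. sum_list (map (\<lambda>x. \<phi> x z) xs)) \<in> Lp N p" using lsum_Lp[OF p] Cons by auto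
  have "AE w in N. T (\<lambda>z. \<phi> y z + sum_list (map (\<lambda>x. \<phi> x z) xs)) w = T (\<phi> y) w + T (\<lambda>z. sum_list (map (\<lambda>x. \<phi> x z) xs)) w"
    using bounded_opD(3)[OF T, of "\<phi> y", OF _ r] Cons by auto
  with Cons show ?case by (auto elim: AE_mp)
qed

lemma AE_list: "(\<forall>x\<in>set xs. AE y in N. Q x y) \<Longrightarrow> AE y in N. \<forall>x\<in>set xs. Q x y"
  by (subst AE_ball_countable) (auto intro: countable_finite)

lemma sum_list_concat': "sum_list (concat xss) = sum_list (map sum_list xss)"
  by (induction xss) auto

fun comps :: "(nat \<Rightarrow> 'a \<Rightarrow> 'a) \<Rightarrow> (nat \<Rightarrow> 'a \<Rightarrow> 'a) \<Rightarrow> (complex \<Rightarrow> 'a \<Rightarrow> 'a) \<Rightarrow> ncpoly \<Rightarrow> (int \<times> ('a \<Rightarrow> 'a)) list" where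
  "comps \<sigma> \<tau> sc (Scal c) = [(0, sc c)]"
| "comps \<sigma> \<tau> sc (GenS j) = [(1, \<sigma> j)]"
| "comps \<sigma> \<tau> sc (GenT j) = [(-1, \<tau> j)]"
| "comps \<sigma> \<tau> sc (Add P Q) = comps \<sigma> \<tau> sc P @ comps \<sigma> \<tau> sc Q"
| "comps \<sigma> \<tau> sc (Mul P Q) = concat (map (\<lambda>d. map (\<lambda>c. (fst c + fst d, \<lambda>a. snd c (snd d a))) (comps \<sigma> \<tau> sc P)) (comps \<sigma> \<tau> sc Q))"

lemma comps_closed:
  assumes cl: "\<forall>j\<in>J. \<forall>a\<in>D. \<sigma> j a \<in> D \<and> \<tau> j a \<in> D" "\<forall>c. \<forall>a\<in>D. sc c a \<in> D"
  shows "gens_in P \<subseteq> J \<Longrightarrow> c \<in> set (comps \<sigma> \<tau> sc P) \<Longrightarrow> a \<in> D \<Longrightarrow> snd c a \<in> D"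
  by (induction P arbitrary: c a) (use cl in \<open>auto\<close>)

lemma decomp:
  assumes p: "p \<ge> 1"
    and bop: "\<forall>j\<in>J. bounded_op N p (S j) \<and> bounded_op N p (T j)"
    and ED: "\<forall>a\<in>D. E a \<in> Lp N p"
    and cl: "\<forall>j\<in>J. \<forall>a\<in>D. \<sigma> j a \<in> D \<and> \<tau> j a \<in> D" "\<forall>c. \<forall>a\<in>D. sc c a \<in> D"
    and genS: "\<forall>j\<in>J. \<forall>a\<in>D. AE x in N. S j (E a) x = E (\<sigma> j a) x"
    and genT: "\<forall>j\<in>J. \<forall>a\<in>D. AE x in N. T j (E a) x = E (\<tau> j a) x"
    and scal: "\<And>c a. a \<in> D \<Longrightarrow> E (sc c a) = (\<lambda>x. c * E a x)"
  shows "gens_in P \<subseteq> J \<Longrightarrow> a \<in> D \<Longrightarrow>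
    AE x in N. ev S T P (E a) x = sum_list (map (\<lambda>c. E (snd c a) x) (comps \<sigma> \<tau> sc P))"
proof (induction P arbitrary: a)
  case (Scal c) thus ?case by (simp add: scal)
next
  case (GenS j) thus ?case using genS by simp
next
  case (GenT j) thus ?case using genT by simp
next
  case (Add P Q)
  have "AE x in N. ev S T P (E a) x = (\<Sum>c\<leftarrow>comps \<sigma> \<tau> sc P. E (snd c a) x)"
       "AE x in N. ev S T Q (E a) x = (\<Sum>c\<leftarrow>comps \<sigma> \<tau> sc Q. E (snd c a) x)"
    using Add by auto
  thus ?case by eventually_elim simp
next
  case (Mul P Q)
  let ?cP = "comps \<sigma> \<tau> sc P" and ?cQ = "comps \<sigma> \<tau> sc Q"
  define g where "g = (\<lambda>z. sum_list (map (\<lambda>d. E (snd d a) z) ?cQ))"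
  have PJ: "gens_in P \<subseteq> J" and QJ: "gens_in Q \<subseteq> J" using Mul by auto
  have bP: "bounded_op N p (ev S T P)" and bQ: "bounded_op N p (ev S T Q)"
    using bounded_op_ev[OF p bop] PJ QJ by auto
  have inD: "\<forall>d\<in>set ?cQ. snd d a \<in> D" using comps_closed[OF cl QJ] Mul by auto
  have gLp: "g \<in> Lp N p" unfolding g_def using inD ED by (intro lsum_Lp[OF p]) auto
  have EaLp: "ev S T Q (E a) \<in> Lp N p" using bounded_opD(1)[OF bQ] ED Mul by auto
  have 1: "AE z in N. ev S T P (ev S T Q (E a)) z = ev S T P g z"
    using bounded_opD(2)[OF bP EaLp gLp] Mul.IH(2)[OF QJ Mul.prems(2)] unfolding g_def by auto
  have 2: "AE z in N. ev S T P g z = sum_list (map (\<lambda>d. ev S T P (E (snd d a)) z) ?cQ)"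
    unfolding g_def using inD ED by (intro op_sum[OF p bP]) auto
  have 3: "AE z in N. \<forall>d\<in>set ?cQ. ev S T P (E (snd d a)) z = sum_list (map (\<lambda>c. E (snd c (snd d a)) z) ?cP)"
    using Mul.IH(1)[OF PJ] inD by (intro AE_list) auto
  show ?case
    using 1 2 3
  proof eventually_elim
    case (elim z)
    have "ev S T (Mul P Q) (E a) z = sum_list (map (\<lambda>d. sum_list (map (\<lambda>c. E (snd c (snd d a)) z) ?cP)) ?cQ)"
      using elim by (simp cong: map_cong)
    thus ?case by (simp add: sum_list_concat' map_concat o_def)
  qed
qed

definition shiftn :: "int \<Rightarrow> (int \<Rightarrow> complex) \<Rightarrow> (int \<Rightarrow> complex)" where
  "shiftn n \<eta> = (\<lambda>m. \<eta> (m - n))"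

lemma shift_eq: "shift = shiftn 1" "shift_inv = shiftn (-1)"
  by (auto simp: shift_def shift_inv_def shiftn_def fun_eq_iff)

lemma shiftn_shiftn: "shiftn a (shiftn b \<eta>) = shiftn (a + b) \<eta>"
  by (simp add: shiftn_def algebra_simps)

lemma shiftn_0: "shiftn 0 \<eta> = \<eta>"
  by (simp add: shiftn_def)

lemma Lp_count_shiftn:
  assumes "\<eta> \<in> Lp (count_space (UNIV::int set)) p"
  shows "shiftn n \<eta> \<in> Lp (count_space (UNIV::int set)) p"
proof -
  have b: "bij_betw (\<lambda>m. m - n) (UNIV::int set) UNIV"
    by (rule bij_betwI[where g="\<lambda>m. m + n"]) auto
  have "(\<integral>\<^sup>+ m. ennreal (cmod (\<eta> (m - n)) powr p) \<partial>count_space UNIV)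
      = (\<integral>\<^sup>+ m. ennreal (cmod (\<eta> m) powr p) \<partial>count_space UNIV)"
    using nn_integral_bij_count_space[OF b, of "\<lambda>m. ennreal (cmod (\<eta> m) powr p)"] by simp
  thus ?thesis using assms by (simp add: Lp_def shiftn_def)
qed

lemma tensor_meas:
  assumes "\<xi> \<in> borel_measurable M"
  shows "tensor \<xi> \<eta> \<in> borel_measurable (M \<Otimes>\<^sub>M count_space (UNIV::int set))"
proof -
  have "(\<lambda>z. \<xi> (fst z) * \<eta> (snd z)) \<in> borel_measurable (M \<Otimes>\<^sub>M count_space (UNIV::int set))"
    using assms by measurable
  moreover have "tensor \<xi> \<eta> = (\<lambda>z. \<xi> (fst z) * \<eta> (snd z))"
    by (auto simp: tensor_def fun_eq_iff)
  ultimately show ?thesis by simp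
qed

lemma tonelli:
  assumes "f \<in> borel_measurable (M \<Otimes>\<^sub>M count_space (UNIV::int set))"
  shows "integral\<^sup>N (M \<Otimes>\<^sub>M count_space (UNIV::int set)) f = (\<integral>\<^sup>+ x. \<integral>\<^sup>+ y. f (x, y) \<partial>count_space UNIV \<partial>M)"
  using sigma_finite_measure.nn_integral_fst[OF sigma_finite_measure_count_space assms] by simp

lemma tensor_Lp:
  assumes x: "\<xi> \<in> Lp M p" and e: "\<eta> \<in> Lp (count_space (UNIV::int set)) p" and p: "p > 0"
  shows "tensor \<xi> \<eta> \<in> Lp (M \<Otimes>\<^sub>M count_space UNIV) p"
    "(\<integral>\<^sup>+ z. ennreal (cmod (tensor \<xi> \<eta> z) powr p) \<partial>(M \<Otimes>\<^sub>M count_space UNIV))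
     = (\<integral>\<^sup>+ x. ennreal (cmod (\<xi> x) powr p) \<partial>M) * (\<integral>\<^sup>+ m. ennreal (cmod (\<eta> m) powr p) \<partial>count_space UNIV)"
proof -
  have mx: "\<xi> \<in> borel_measurable M" using x by (simp add: Lp_def)
  have mt: "tensor \<xi> \<eta> \<in> borel_measurable (M \<Otimes>\<^sub>M count_space (UNIV::int set))"
    using tensor_meas[OF mx] .
  have "(\<integral>\<^sup>+ z. ennreal (cmod (tensor \<xi> \<eta> z) powr p) \<partial>(M \<Otimes>\<^sub>M count_space UNIV))
    = (\<integral>\<^sup>+ x. \<integral>\<^sup>+ m. ennreal (cmod (\<xi> x) powr p) * ennreal (cmod (\<eta> m) powr p) \<partial>count_space UNIV \<partial>M)"
    using mt by (subst tonelli) (auto simp: tensor_def norm_mult powr_mult ennreal_mult)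
  also have "\<dots> = (\<integral>\<^sup>+ x. ennreal (cmod (\<xi> x) powr p) * (\<integral>\<^sup>+ m. ennreal (cmod (\<eta> m) powr p) \<partial>count_space UNIV) \<partial>M)"
    by (subst nn_integral_cmult) auto
  also have "\<dots> = (\<integral>\<^sup>+ x. ennreal (cmod (\<xi> x) powr p) \<partial>M) * (\<integral>\<^sup>+ m. ennreal (cmod (\<eta> m) powr p) \<partial>count_space UNIV)"
    using mx by (subst nn_integral_multc) auto
  finally show eq: "(\<integral>\<^sup>+ z. ennreal (cmod (tensor \<xi> \<eta> z) powr p) \<partial>(M \<Otimes>\<^sub>M count_space UNIV))
     = (\<integral>\<^sup>+ x. ennreal (cmod (\<xi> x) powr p) \<partial>M) * (\<integral>\<^sup>+ m. ennreal (cmod (\<eta> m) powr p) \<partial>count_space UNIV)" .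
  show "tensor \<xi> \<eta> \<in> Lp (M \<Otimes>\<^sub>M count_space UNIV) p"
    using mt x e unfolding Lp_def by (simp add: eq ennreal_mult_less_top)
qed

definition sig2 :: "(nat \<Rightarrow> 'x op) \<Rightarrow> nat \<Rightarrow> ('x \<Rightarrow> complex) \<times> (int \<Rightarrow> complex) \<Rightarrow> ('x \<Rightarrow> complex) \<times> (int \<Rightarrow> complex)" where
  "sig2 s j a = (s j (fst a), shiftn 1 (snd a))"
definition tau2 :: "(nat \<Rightarrow> 'x op) \<Rightarrow> nat \<Rightarrow> ('x \<Rightarrow> complex) \<times> (int \<Rightarrow> complex) \<Rightarrow> ('x \<Rightarrow> complex) \<times> (int \<Rightarrow> complex)" where
  "tau2 t j a = (t j (fst a), shiftn (-1) (snd a))"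
definition sc2 :: "complex \<Rightarrow> ('x \<Rightarrow> complex) \<times> (int \<Rightarrow> complex) \<Rightarrow> ('x \<Rightarrow> complex) \<times> (int \<Rightarrow> complex)" where
  "sc2 c a = ((\<lambda>x. c * fst a x), snd a)"

lemma comps_deg:
  "c \<in> set (comps (sig2 s) (tau2 t) sc2 P) \<Longrightarrow> snd (snd c a) = shiftn (fst c) (snd a)"
proof (induction P arbitrary: c a)
  case (Mul P Q)
  then obtain c1 d where c1: "c1 \<in> set (comps (sig2 s) (tau2 t) sc2 P)" and d: "d \<in> set (comps (sig2 s) (tau2 t) sc2 Q)"
    and c: "c = (fst c1 + fst d, \<lambda>a. snd c1 (snd d a))" by auto
  have "snd (snd c a) = snd (snd c1 (snd d a))" using c by simp
  also have "\<dots> = shiftn (fst c1) (snd (snd d a))" using Mul.IH(1)[OF c1] .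
  also have "\<dots> = shiftn (fst c1) (shiftn (fst d) (snd a))" using Mul.IH(2)[OF d] by simp
  finally show ?case using c by (simp add: shiftn_shiftn)
qed (auto simp: sig2_def tau2_def sc2_def shiftn_0)

lemma claims:
  fixes M :: "'x measure" and s t :: "nat \<Rightarrow> 'x op" and su tu :: "nat \<Rightarrow> ('x \<times> int) op"
  assumes p: "1 \<le> p"
    and bs: "\<forall>j\<in>J. bounded_op M p (s j) \<and> bounded_op M p (t j)"
    and bu: "\<forall>j\<in>J. bounded_op (M \<Otimes>\<^sub>M count_space (UNIV :: int set)) p (su j) \<and> bounded_op (M \<Otimes>\<^sub>M count_space (UNIV :: int set)) p (tu j)"
    and hS: "\<forall>j\<in>J. \<forall>\<xi>\<in>Lp M p. \<forall>\<eta>\<in>Lp (count_space (UNIV :: int set)) p.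
           AE z in M \<Otimes>\<^sub>M count_space (UNIV :: int set).
             su j (tensor \<xi> \<eta>) z = tensor (s j \<xi>) (shift \<eta>) z"
    and hT: "\<forall>j\<in>J. \<forall>\<xi>\<in>Lp M p. \<forall>\<eta>\<in>Lp (count_space (UNIV :: int set)) p.
           AE z in M \<Otimes>\<^sub>M count_space (UNIV :: int set).
             tu j (tensor \<xi> \<eta>) z = tensor (t j \<xi>) (shift_inv \<eta>) z"
    and PJ: "gens_in P \<subseteq> J"
    and a: "a \<in> Lp M p \<times> Lp (count_space (UNIV :: int set)) p"
  shows "AE x in M. ev s t P (fst a) x = sum_list (map (\<lambda>c. fst (snd c a) x) (comps (sig2 s) (tau2 t) sc2 P))"
    "AE z in M \<Otimes>\<^sub>M count_space (UNIV :: int set). ev su tu P (tensor (fst a) (snd a)) z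
        = sum_list (map (\<lambda>c. tensor (fst (snd c a)) (snd (snd c a)) z) (comps (sig2 s) (tau2 t) sc2 P))"
    "\<forall>c\<in>set (comps (sig2 s) (tau2 t) sc2 P). snd c a \<in> Lp M p \<times> Lp (count_space (UNIV :: int set)) p"
proof -
  let ?D = "Lp M p \<times> Lp (count_space (UNIV :: int set)) p"
  have cl1: "\<forall>j\<in>J. \<forall>a\<in>?D. sig2 s j a \<in> ?D \<and> tau2 t j a \<in> ?D"
    using bs by (auto simp: sig2_def tau2_def intro: Lp_count_shiftn bounded_opD(1))
  have cl2: "\<forall>c. \<forall>a\<in>?D. sc2 c a \<in> ?D"
    using p by (auto simp: sc2_def intro: Lp_scal(1))
  show "\<forall>c\<in>set (comps (sig2 s) (tau2 t) sc2 P). snd c a \<in> ?D"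
    using comps_closed[OF cl1 cl2 PJ] a by blast
  show "AE x in M. ev s t P (fst a) x = sum_list (map (\<lambda>c. fst (snd c a) x) (comps (sig2 s) (tau2 t) sc2 P))"
    by (rule decomp[OF p bs _ cl1 cl2 _ _ _ PJ a]) (auto simp: sig2_def tau2_def sc2_def)
  show "AE z in M \<Otimes>\<^sub>M count_space (UNIV :: int set). ev su tu P (tensor (fst a) (snd a)) z
        = sum_list (map (\<lambda>c. tensor (fst (snd c a)) (snd (snd c a)) z) (comps (sig2 s) (tau2 t) sc2 P))"
  proof (rule decomp[OF p bu _ cl1 cl2 _ _ _ PJ a, where E="\<lambda>a. tensor (fst a) (snd a)"])
    show "\<forall>a\<in>?D. tensor (fst a) (snd a) \<in> Lp (M \<Otimes>\<^sub>M count_space UNIV) p"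
      using p by (auto intro: tensor_Lp(1))
    show "\<forall>j\<in>J. \<forall>a\<in>?D. AE x in M \<Otimes>\<^sub>M count_space UNIV. su j (tensor (fst a) (snd a)) x = tensor (fst (sig2 s j a)) (snd (sig2 s j a)) x"
      using hS by (auto simp: sig2_def shift_eq)
    show "\<forall>j\<in>J. \<forall>a\<in>?D. AE x in M \<Otimes>\<^sub>M count_space UNIV. tu j (tensor (fst a) (snd a)) x = tensor (fst (tau2 t j a)) (snd (tau2 t j a)) x"
      using hT by (auto simp: tau2_def shift_eq)
    show "\<And>c a. a \<in> ?D \<Longrightarrow> tensor (fst (sc2 c a)) (snd (sc2 c a)) = (\<lambda>x. c * tensor (fst a) (snd a) x)"
      by (auto simp: sc2_def tensor_def fun_eq_iff)
  qed
qed

lemma abs_le_K: fixes xs :: "(int \<times> 'b) list" shows "c \<in> set xs \<Longrightarrow> \<bar>fst c\<bar> \<le> sum_list (map (\<lambda>c. \<bar>fst c\<bar>) xs)"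
proof (induction xs)
  case (Cons y xs)
  have "0 \<le> sum_list (map (\<lambda>c. \<bar>fst c\<bar>) xs)" by (induction xs) auto
  thus ?case using Cons by auto
qed simp

lemma key:
  fixes M :: "'x measure" and s t :: "nat \<Rightarrow> 'x op" and su tu :: "nat \<Rightarrow> ('x \<times> int) op"
  assumes p: "1 \<le> p"
    and bs: "\<forall>j\<in>J. bounded_op M p (s j) \<and> bounded_op M p (t j)"
    and bu: "\<forall>j\<in>J. bounded_op (M \<Otimes>\<^sub>M count_space (UNIV :: int set)) p (su j) \<and> bounded_op (M \<Otimes>\<^sub>M count_space (UNIV :: int set)) p (tu j)"
    and hS: "\<forall>j\<in>J. \<forall>\<xi>\<in>Lp M p. \<forall>\<eta>\<in>Lp (count_space (UNIV :: int set)) p.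
           AE z in M \<Otimes>\<^sub>M count_space (UNIV :: int set).
             su j (tensor \<xi> \<eta>) z = tensor (s j \<xi>) (shift \<eta>) z"
    and hT: "\<forall>j\<in>J. \<forall>\<xi>\<in>Lp M p. \<forall>\<eta>\<in>Lp (count_space (UNIV :: int set)) p.
           AE z in M \<Otimes>\<^sub>M count_space (UNIV :: int set).
             tu j (tensor \<xi> \<eta>) z = tensor (t j \<xi>) (shift_inv \<eta>) z"
    and PJ: "gens_in P \<subseteq> J"
    and xi: "\<xi> \<in> Lp M p" "pnorm M p \<xi> \<le> 1"
    and B: "\<forall>g\<in>Lp (M \<Otimes>\<^sub>M count_space (UNIV :: int set)) p. pnorm (M \<Otimes>\<^sub>M count_space (UNIV :: int set)) p g \<le> 1
              \<longrightarrow> pnorm (M \<Otimes>\<^sub>M count_space (UNIV :: int set)) p (ev su tu P g) \<le> B" "B \<ge> 0"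
  shows "pnorm M p (ev s t P \<xi>) \<le> B"
proof -
  let ?cs = "comps (sig2 s) (tau2 t) sc2 P"
  let ?CS = "count_space (UNIV :: int set)"
  let ?Mp = "M \<Otimes>\<^sub>M count_space (UNIV :: int set)"
  define K where "K = sum_list (map (\<lambda>c. \<bar>fst c\<bar>) ?cs)"
  have Kb: "\<And>c. c \<in> set ?cs \<Longrightarrow> \<bar>fst c\<bar> \<le> K" unfolding K_def by (rule abs_le_K)
  have p0: "p > 0" using p by simp
  define I1 where "I1 = (\<integral>\<^sup>+ x. ennreal (cmod (ev s t P \<xi> x) powr p) \<partial>M)"
  have evLp: "ev s t P \<xi> \<in> Lp M p" using bounded_opD(1)[OF bounded_op_ev[OF p bs PJ] xi(1)] .
  have I1fin: "I1 < \<infinity>" using evLp by (simp add: I1_def Lp_def)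
  have step: "ennreal (real_of_int (2 * (int N - K) + 1) / real (2 * N + 1)) * I1 \<le> ennreal (B powr p)"
    if NK: "int N \<ge> K" for N :: nat
  proof -
    define cN :: real where "cN = real (2*N+1) powr (-1/p)"
    have cN0: "cN > 0" unfolding cN_def by simp
    have cNp: "cN powr p = 1 / real (2*N+1)"
    proof -
      have "cN powr p = real (2*N+1) powr ((-1/p)*p)" unfolding cN_def by (rule powr_powr)
      also have "(-1/p)*p = -1" using p0 by simp
      finally show ?thesis by (simp add: powr_minus_divide)
    qed
    define \<eta> where "\<eta> m = (if \<bar>m\<bar> \<le> int N then complex_of_real cN else 0)" for m :: int
    have \<eta>fun: "(\<lambda>m. ennreal (cmod (\<eta> m) powr p)) = (\<lambda>m. ennreal (cN powr p) * indicator {-int N..int N} m)"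
      using cN0 p0 by (auto simp: \<eta>_def fun_eq_iff indicator_def abs_le_iff)
    have nat2: "nat (2 * int N + 1) = 2*N+1" by arith
    have \<eta>I: "(\<integral>\<^sup>+ m. ennreal (cmod (\<eta> m) powr p) \<partial>?CS) = 1"
    proof -
      have "(\<integral>\<^sup>+ m. ennreal (cmod (\<eta> m) powr p) \<partial>?CS) = ennreal (cN powr p) * of_nat (2*N+1)"
        unfolding \<eta>fun by (subst nn_integral_cmult_indicator) (auto simp: nat2)
      also have "\<dots> = ennreal (cN powr p * real (2*N+1))"
        by (simp add: ennreal_of_nat_eq_real_of_nat ennreal_mult)
      also have "cN powr p * real (2*N+1) = 1" by (simp add: cNp)
      finally show ?thesis by simp
    qed
    have \<eta>Lp: "\<eta> \<in> Lp ?CS p" by (simp add: Lp_def \<eta>I)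
    define g where "g = tensor \<xi> \<eta>"
    have gLp: "g \<in> Lp ?Mp p" unfolding g_def using tensor_Lp(1)[OF xi(1) \<eta>Lp p0] .
    have "pnorm ?Mp p g = pnorm M p \<xi>"
      unfolding pnorm_def g_def tensor_Lp(2)[OF xi(1) \<eta>Lp p0] \<eta>I by simp
    hence gn: "pnorm ?Mp p g \<le> 1" using xi(2) by simp
    define h where "h = ev su tu P g"
    have hLp: "h \<in> Lp ?Mp p" unfolding h_def using bounded_opD(1)[OF bounded_op_ev[OF p bu PJ] gLp] .
    have hB: "pnorm ?Mp p h \<le> B" using B(1) gLp gn unfolding h_def by blast
    define Ih where "Ih = (\<integral>\<^sup>+ z. ennreal (cmod (h z) powr p) \<partial>?Mp)"
    have Ihfin: "Ih < \<infinity>" using hLp by (simp add: Ih_def Lp_def)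
    have up: "Ih \<le> ennreal (B powr p)"
    proof -
      have "enn2real Ih = (enn2real Ih powr (1/p)) powr p"
        using p0 by (simp add: powr_powr)
      also have "\<dots> \<le> B powr p"
        using hB p0 unfolding pnorm_def Ih_def[symmetric] by (intro powr_mono2) auto
      finally have "enn2real Ih \<le> B powr p" .
      hence "ennreal (enn2real Ih) \<le> ennreal (B powr p)" by (rule ennreal_leI)
      moreover have "ennreal (enn2real Ih) = Ih" using Ihfin by simp
      ultimately show ?thesis by simp
    qed
    define a where "a = (\<xi>, \<eta>)"
    have aD: "a \<in> Lp M p \<times> Lp ?CS p" using xi \<eta>Lp by (simp add: a_def)
    note C = claims[OF p bs bu hS hT PJ aD]
    define V where "V x = sum_list (map (\<lambda>c. fst (snd c a) x) ?cs)" for x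
    define R where "R z = sum_list (map (\<lambda>c. tensor (fst (snd c a)) (snd (snd c a)) z) ?cs)" for z
    have C1: "AE x in M. ev s t P \<xi> x = V x" using C(1) by (simp add: V_def a_def)
    have C2: "AE z in ?Mp. h z = R z" using C(2) by (simp add: R_def h_def g_def a_def)
    have VLp: "V \<in> Lp M p" unfolding V_def using C(3) by (intro lsum_Lp[OF p]) auto
    have RLp: "R \<in> Lp ?Mp p" unfolding R_def
    proof (intro lsum_Lp[OF p] ballI)
      fix c assume "c \<in> set ?cs"
      hence "snd c a \<in> Lp M p \<times> Lp ?CS p" using C(3) by blast
      thus "tensor (fst (snd c a)) (snd (snd c a)) \<in> Lp ?Mp p"
        using tensor_Lp(1)[OF _ _ p0] by (auto simp: mem_Times_iff)
    qed
    have Rm: "R \<in> borel_measurable ?Mp" and Vm: "V \<in> borel_measurable M" using RLp VLp by (auto simp: Lp_def)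
    have Rval: "R (x, m) = complex_of_real cN * V x" if m: "\<bar>m\<bar> \<le> int N - K" for x m
    proof -
      have "R (x, m) = sum_list (map (\<lambda>c. fst (snd c a) x * complex_of_real cN) ?cs)"
        unfolding R_def
      proof (intro arg_cong[where f=sum_list] map_cong refl)
        fix c assume c: "c \<in> set ?cs"
        have "\<bar>m - fst c\<bar> \<le> int N" using Kb[OF c] m by linarith
        thus "tensor (fst (snd c a)) (snd (snd c a)) (x, m) = fst (snd c a) x * complex_of_real cN"
          using comps_deg[OF c, of a] by (simp add: tensor_def shiftn_def \<eta>_def a_def)
      qed
      also have "\<dots> = complex_of_real cN * V x"
        unfolding V_def by (simp add: sum_list_const_mult[symmetric] mult.commute)
      finally show ?thesis .
    qed
    define r where "r = 2 * (int N - K) + 1"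
    have r0: "r > 0" using NK by (simp add: r_def)
    have "Ih = (\<integral>\<^sup>+ z. ennreal (cmod (R z) powr p) \<partial>?Mp)"
      unfolding Ih_def using C2 by (intro nn_integral_cong_AE) auto
    also have "\<dots> = (\<integral>\<^sup>+ x. \<integral>\<^sup>+ m. ennreal (cmod (R (x, m)) powr p) \<partial>?CS \<partial>M)"
      using Rm by (subst tonelli) auto
    also have "\<dots> \<ge> (\<integral>\<^sup>+ x. \<integral>\<^sup>+ m. ennreal (cN powr p * cmod (V x) powr p) * indicator {-(int N - K)..int N - K} m \<partial>?CS \<partial>M)"
    proof (intro nn_integral_mono)
      fix x m
      show "ennreal (cN powr p * cmod (V x) powr p) * indicator {-(int N - K)..int N - K} m \<le> ennreal (cmod (R (x, m)) powr p)"
      proof (cases "\<bar>m\<bar> \<le> int N - K")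
        case True
        have i1: "indicator {-(int N - K)..int N - K} m = (1::ennreal)" using True by (auto simp: indicator_def abs_le_iff)
        have "cmod (R (x, m)) powr p = cN powr p * cmod (V x) powr p"
          using cN0 True by (simp add: Rval norm_mult powr_mult)
        thus ?thesis using i1 by simp
      next
        case False
        have i0: "indicator {-(int N - K)..int N - K} m = (0::ennreal)" using False by (auto simp: indicator_def abs_le_iff)
        thus ?thesis by simp
      qed
    qed
    also have "(\<integral>\<^sup>+ x. \<integral>\<^sup>+ m. ennreal (cN powr p * cmod (V x) powr p) * indicator {-(int N - K)..int N - K} m \<partial>?CS \<partial>M)
        = (\<integral>\<^sup>+ x. ennreal (real_of_int r / real (2 * N + 1)) * ennreal (cmod (V x) powr p) \<partial>M)"
    proof (intro nn_integral_cong)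
      fix x
      have "(\<integral>\<^sup>+ m. ennreal (cN powr p * cmod (V x) powr p) * indicator {-(int N - K)..int N - K} m \<partial>?CS)
          = ennreal (cN powr p * cmod (V x) powr p) * of_nat (nat r)"
        proof -
          have "card {-(int N - K)..int N - K} = nat r" by (simp add: r_def)
          thus ?thesis by (subst nn_integral_cmult_indicator) auto
        qed
      also have "\<dots> = ennreal (cN powr p * cmod (V x) powr p * real_of_int r)"
        using r0 by (simp add: ennreal_of_nat_eq_real_of_nat ennreal_mult)
      also have "cN powr p * cmod (V x) powr p * real_of_int r = (real_of_int r / real (2 * N + 1)) * cmod (V x) powr p"
        by (simp add: cNp)
      also have "ennreal \<dots> = ennreal (real_of_int r / real (2 * N + 1)) * ennreal (cmod (V x) powr p)"
        using r0 by (subst ennreal_mult[symmetric]) auto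
      finally show "(\<integral>\<^sup>+ m. ennreal (cN powr p * cmod (V x) powr p) * indicator {-(int N - K)..int N - K} m \<partial>?CS)
          = ennreal (real_of_int r / real (2 * N + 1)) * ennreal (cmod (V x) powr p)" .
    qed
    also have "\<dots> = ennreal (real_of_int r / real (2 * N + 1)) * (\<integral>\<^sup>+ x. ennreal (cmod (V x) powr p) \<partial>M)"
      using Vm by (subst nn_integral_cmult) auto
    also have "(\<integral>\<^sup>+ x. ennreal (cmod (V x) powr p) \<partial>M) = I1"
      unfolding I1_def using C1 by (intro nn_integral_cong_AE) auto
    finally have "ennreal (real_of_int r / real (2 * N + 1)) * I1 \<le> Ih" .
    thus ?thesis using up unfolding r_def by simp
  qed
  define I1r where "I1r = enn2real I1"
  have I1eq: "I1 = ennreal I1r" using I1fin by (simp add: I1r_def)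
  have I1r0: "I1r \<ge> 0" by (simp add: I1r_def)
  have qle: "(2*real N - 2*real_of_int K + 1)/(2*real N + 1) * I1r \<le> B powr p" if NK: "N \<ge> nat K" for N :: nat
  proof -
    have NK': "int N \<ge> K" using NK by linarith
    have q0: "real_of_int (2 * (int N - K) + 1) / real (2 * N + 1) \<ge> 0" using NK' by simp
    have "ennreal (real_of_int (2 * (int N - K) + 1) / real (2 * N + 1) * I1r) \<le> ennreal (B powr p)"
      using step[OF NK'] q0 I1r0 unfolding I1eq by (subst ennreal_mult) auto
    hence "real_of_int (2 * (int N - K) + 1) / real (2 * N + 1) * I1r \<le> B powr p"
      by (subst (asm) ennreal_le_iff) auto
    thus ?thesis by (simp add: algebra_simps)
  qed
  have q_lim: "(\<lambda>N::nat. (2*real N - 2*real_of_int K + 1)/(2*real N + 1)) \<longlonglongrightarrow> 1"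
    by real_asymp
  have "(\<lambda>N::nat. (2*real N - 2*real_of_int K + 1)/(2*real N + 1) * I1r) \<longlonglongrightarrow> 1 * I1r"
    by (intro tendsto_mult q_lim tendsto_const)
  hence I1le: "I1r \<le> B powr p"
    using qle by (intro LIMSEQ_le_const2[where X="\<lambda>N::nat. (2*real N - 2*real_of_int K + 1)/(2*real N + 1) * I1r"]) auto
  have "pnorm M p (ev s t P \<xi>) = I1r powr (1/p)" by (simp add: pnorm_def I1r_def I1_def)
  also have "\<dots> \<le> (B powr p) powr (1/p)" using I1le I1r0 p0 by (intro powr_mono2) auto
  also have "\<dots> = B" using p0 B(2) by (simp add: powr_powr)
  finally show ?thesis .
qed

theorem proposition8p3:
  fixes A :: alg and p :: real and M :: "'x measure"
    and s t :: "nat \<Rightarrow> 'x op" and su tu :: "nat \<Rightarrow> ('x \<times> int) op"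
  assumes "valid_alg A"
    and "1 \<le> p"
    and "sigma_finite_measure M"
    and "is_rep A M p s t"
    and "is_rep A (M \<Otimes>\<^sub>M count_space (UNIV :: int set)) p su tu"
    and "\<forall>j\<in>idx A. \<forall>\<xi>\<in>Lp M p. \<forall>\<eta>\<in>Lp (count_space (UNIV :: int set)) p.
           AE z in M \<Otimes>\<^sub>M count_space (UNIV :: int set).
             su j (tensor \<xi> \<eta>) z = tensor (s j \<xi>) (shift \<eta>) z"
    and "\<forall>j\<in>idx A. \<forall>\<xi>\<in>Lp M p. \<forall>\<eta>\<in>Lp (count_space (UNIV :: int set)) p.
           AE z in M \<Otimes>\<^sub>M count_space (UNIV :: int set).
             tu j (tensor \<xi> \<eta>) z = tensor (t j \<xi>) (shift_inv \<eta>) z"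
  shows "\<forall>P. gens_in P \<subseteq> idx A \<longrightarrow>
           op_norm (M \<Otimes>\<^sub>M count_space (UNIV :: int set)) p (ev su tu P) \<ge> op_norm M p (ev s t P)"
proof (intro allI impI)
  fix P assume PJ: "gens_in P \<subseteq> idx A"
  have p: "1 \<le> p" using assms(2) .
  have p0: "p > 0" using p by simp
  have bs: "\<forall>j\<in>idx A. bounded_op M p (s j) \<and> bounded_op M p (t j)"
    using assms(4) unfolding is_rep_def by blast
  have bu: "\<forall>j\<in>idx A. bounded_op (M \<Otimes>\<^sub>M count_space (UNIV :: int set)) p (su j) \<and> bounded_op (M \<Otimes>\<^sub>M count_space (UNIV :: int set)) p (tu j)"
    using assms(5) unfolding is_rep_def by blast
  let ?Mp = "M \<Otimes>\<^sub>M count_space (UNIV :: int set)"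
  have bT: "bounded_op ?Mp p (ev su tu P)" using bounded_op_ev[OF p bu PJ] .
  obtain C where C: "C \<ge> 0" "\<forall>f\<in>Lp ?Mp p. pnorm ?Mp p (ev su tu P f) \<le> C * pnorm ?Mp p f"
    using bounded_opD(5)[OF bT] by blast
  let ?SL = "(\<lambda>f. pnorm ?Mp p (ev su tu P f)) ` {f \<in> Lp ?Mp p. pnorm ?Mp p f \<le> 1}"
  have bdd: "bdd_above ?SL"
  proof (rule bdd_aboveI[of _ C])
    fix y assume "y \<in> ?SL"
    then obtain f where f: "f \<in> Lp ?Mp p" "pnorm ?Mp p f \<le> 1" and y: "y = pnorm ?Mp p (ev su tu P f)" by auto
    have "y \<le> C * pnorm ?Mp p f" using C(2) f y by auto
    also have "\<dots> \<le> C * 1" using C(1) f(2) by (intro mult_left_mono) auto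
    finally show "y \<le> C" by simp
  qed
  define B where "B = op_norm ?Mp p (ev su tu P)"
  have Bup: "\<forall>g\<in>Lp ?Mp p. pnorm ?Mp p g \<le> 1 \<longrightarrow> pnorm ?Mp p (ev su tu P g) \<le> B"
    unfolding B_def op_norm_def using bdd by (auto intro!: cSup_upper)
  have B0: "B \<ge> 0"
    using Bup Lp_zero[of ?Mp p] pnorm_zero[OF p0, of ?Mp] pnorm_nonneg[of ?Mp p "ev su tu P (\<lambda>x. 0)"]
    by force
  have "op_norm M p (ev s t P) \<le> B"
    unfolding op_norm_def
  proof (rule cSup_least)
    show "(\<lambda>f. pnorm M p (ev s t P f)) ` {f \<in> Lp M p. pnorm M p f \<le> 1} \<noteq> {}"
      using Lp_zero[of M p] pnorm_zero[OF p0, of M] by auto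
  next
    fix y assume "y \<in> (\<lambda>f. pnorm M p (ev s t P f)) ` {f \<in> Lp M p. pnorm M p f \<le> 1}"
    then obtain \<xi> where xi: "\<xi> \<in> Lp M p" "pnorm M p \<xi> \<le> 1" and y: "y = pnorm M p (ev s t P \<xi>)" by auto
    show "y \<le> B" unfolding y
      by (rule key[OF p bs bu assms(6) assms(7) PJ xi Bup B0])
  qed
  thus "op_norm ?Mp p (ev su tu P) \<ge> op_norm M p (ev s t P)" unfolding B_def .
qed

end
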